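(* Let $\varphi$ be an instance of 2-Clause 3-SAT and let $G(\varphi)$ be the graph constructed from $\varphi$ as described in the context. If $\varphi$ is satisfiable, then $\mathrm{wcol}_2(G(\varphi)) \leq 5$.
   Context: 2-Clause 3-SAT: given a CNF formula $\varphi$ with clauses $c_1,\dots,c_m$ over variables $x_1,\dots,x_n$ in which each clause contains at most 3 literals and each literal ($x_j$ or $\overline{x}_j$) appears in exactly 2 clauses, decide whether $\varphi$ is satisfiable. It is assumed throughout that no variable appears twice in a single clause and that there are no clauses with a single literal (so each clause has 2 or 3 literals). Construction of $G(\varphi)$: for each clause $c_i$ create 6 vertices $u_i^1,\dots,u_i^6$. If $c_i$ contains only 2 literals, add 2 more vertices $f_i, f'_i$, each adjacent to all of $u_i^1,\dots,u_i^6$. For each variable $x_j$ create two vertices $v_j$ and $v'_j$ (for the literals $x_j$ and $\overline{x}_j$) joined by an edge. For each clause $c_i$ containing the literal $x_j$, add an edge from $v_j$ to each of $u_i^1,\dots,u_i^6$; for each clause $c_i$ containing $\overline{x}_j$, add an edge from $v'_j$ to each of $u_i^1,\dots,u_i^6$. Weak coloring numbers: for a graph $G=(V,E)$ and a total order $\sigma$ of $V$, a vertex $v\neq u$ is weakly $r$-reachable from $u$ if $u <_\sigma v$ and there is a $u$–$v$ path $P$ of length at most $r$ such that every vertex $p$ of $P$ other than $u,v$ satisfies $p <_\sigma v$. Let $\mathrm{wreach}_r(u,G_\sigma)$ be the set of such $v$. Then $\mathrm{wcol}_r(G)=\min_\sigma \max_{u\in V}|\mathrm{wreach}_r(u,G_\sigma)|$,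 the minimum over all total orders of $V$. (A vertex is not considered reachable from itself.) *)

theory Defs
  imports Main
begin

text \<open>A literal is a pair (j, b): variable index j (variables are 0..<n);
  b = True means the positive literal x_j, b = False the negative literal.\<close>

type_synonym lit = "nat \<times> bool"

definition two_clause_3sat :: "nat \<Rightarrow> lit set list \<Rightarrow> bool" where
  "two_clause_3sat n cs \<longleftrightarrow>
     (\<forall>c \<in> set cs. finite c \<and> (card c = 2 \<or> card c = 3)
        \<and> (\<forall>(j, b) \<in> c. j < n)
        \<and> (\<forall>j. \<not> ((j, True) \<in> c \<and> (j, False) \<in> c)))
   \<and> (\<forall>j < n. \<forall>b. card {i. i < length cs \<and> (j, b) \<in> cs ! i} = 2)"

definition satisfiable :: "nat \<Rightarrow> lit set list \<Rightarrow> bool" where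
  "satisfiable n cs \<longleftrightarrow>
     (\<exists>a :: nat \<Rightarrow> bool. \<forall>c \<in> set cs. \<exists>(j, b) \<in> c. a j = b)"

datatype vert = U nat nat | F nat | F' nat | V nat | V' nat

definition G_verts :: "nat \<Rightarrow> lit set list \<Rightarrow> vert set" where
  "G_verts n cs =
     {U i k | i k. i < length cs \<and> k \<in> {1..6}}
   \<union> {F i | i. i < length cs \<and> card (cs ! i) = 2}
   \<union> {F' i | i. i < length cs \<and> card (cs ! i) = 2}
   \<union> {V j | j. j < n} \<union> {V' j | j. j < n}"

definition G_base :: "nat \<Rightarrow> lit set list \<Rightarrow> vert \<Rightarrow> vert \<Rightarrow> bool" where
  "G_base n cs x y \<longleftrightarrow>
     (\<exists>i k. i < length cs \<and> k \<in> {1..6} \<and> card (cs ! i) = 2 \<and> x = F i \<and> y = U i k)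
   \<or> (\<exists>i k. i < length cs \<and> k \<in> {1..6} \<and> card (cs ! i) = 2 \<and> x = F' i \<and> y = U i k)
   \<or> (\<exists>j. j < n \<and> x = V j \<and> y = V' j)
   \<or> (\<exists>i k j. i < length cs \<and> k \<in> {1..6} \<and> j < n \<and> (j, True) \<in> cs ! i \<and> x = V j \<and> y = U i k)
   \<or> (\<exists>i k j. i < length cs \<and> k \<in> {1..6} \<and> j < n \<and> (j, False) \<in> cs ! i \<and> x = V' j \<and> y = U i k)"

definition G_adj :: "nat \<Rightarrow> lit set list \<Rightarrow> vert \<Rightarrow> vert \<Rightarrow> bool" where
  "G_adj n cs x y \<longleftrightarrow> G_base n cs x y \<or> G_base n cs y x"

definition ord_before :: "'a list \<Rightarrow> 'a \<Rightarrow> 'a \<Rightarrow> bool" where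
  "ord_before \<sigma> u v \<longleftrightarrow> (\<exists>i j. i < j \<and> j < length \<sigma> \<and> \<sigma> ! i = u \<and> \<sigma> ! j = v)"

definition is_path :: "('a \<Rightarrow> 'a \<Rightarrow> bool) \<Rightarrow> 'a list \<Rightarrow> bool" where
  "is_path E p \<longleftrightarrow> p \<noteq> [] \<and> distinct p \<and> (\<forall>i. Suc i < length p \<longrightarrow> E (p ! i) (p ! Suc i))"

definition wreach :: "('a \<Rightarrow> 'a \<Rightarrow> bool) \<Rightarrow> 'a list \<Rightarrow> nat \<Rightarrow> 'a \<Rightarrow> 'a set" where
  "wreach E \<sigma> r u = {v. v \<noteq> u \<and> ord_before \<sigma> u v \<and>
     (\<exists>p. is_path E p \<and> hd p = u \<and> last p = v \<and> length p \<le> Suc r \<and>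
          (\<forall>x \<in> set p. x \<noteq> u \<and> x \<noteq> v \<longrightarrow> ord_before \<sigma> x v))}"

definition wcol :: "'a set \<Rightarrow> ('a \<Rightarrow> 'a \<Rightarrow> bool) \<Rightarrow> nat \<Rightarrow> nat" where
  "wcol Vs E r = Min {Max (insert 0 ((\<lambda>u. card (wreach E \<sigma> r u)) ` Vs)) | \<sigma>.
                        distinct \<sigma> \<and> set \<sigma> = Vs}"

end

theory Submission
  imports Defs
begin

fun litv :: "lit \<Rightarrow> vert" where "litv (j, True) = V j" | "litv (j, False) = V' j"
lemma litv_eq[simp]: "litv x = litv y \<longleftrightarrow> x = y"
  by (cases x; cases y; cases "snd x"; cases "snd y") auto
lemma V_litv[simp]: "V j = litv l \<longleftrightarrow> l = (j,True)" "V' j = litv l \<longleftrightarrow> l = (j,False)"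
  by (cases l; cases "snd l"; auto)+
lemma U_litv[simp]: "U i k \<noteq> litv l" "F i \<noteq> litv l" "F' i \<noteq> litv l"
  by (cases l; cases "snd l"; auto)+
lemma adj_U: "G_adj n cs (U i k) y \<longleftrightarrow> i < length cs \<and> k \<in> {1..6} \<and>
   ((card (cs!i) = 2 \<and> (y = F i \<or> y = F' i)) \<or> (\<exists>j b. j < n \<and> (j,b) \<in> cs!i \<and> y = litv (j,b)))"
  by (cases y) (auto simp: G_adj_def G_base_def)
lemma adj_F: "G_adj n cs (F i) y \<longleftrightarrow> (\<exists>k. i<length cs \<and> k\<in>{1..6} \<and> card(cs!i)=2 \<and> y = U i k)"
  by (cases y) (auto simp: G_adj_def G_base_def)
lemma adj_F': "G_adj n cs (F' i) y \<longleftrightarrow> (\<exists>k. i<length cs \<and> k\<in>{1..6} \<and> card(cs!i)=2 \<and> y = U i k)"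
  by (cases y) (auto simp: G_adj_def G_base_def)
lemma adj_lit: "G_adj n cs (litv (j,b)) y \<longleftrightarrow> j < n \<and> (y = litv (j, \<not>b) \<or> (\<exists>i k. i<length cs \<and> k\<in>{1..6} \<and> (j,b) \<in> cs!i \<and> y = U i k))"
  by (cases b; cases y) (auto simp: G_adj_def G_base_def)


lemma wreach_sub:
  assumes "v \<in> wreach E \<sigma> 2 u"
  shows "v \<noteq> u \<and> ord_before \<sigma> u v \<and> (E u v \<or> (\<exists>w. E u w \<and> E w v \<and> w \<noteq> u \<and> w \<noteq> v \<and> ord_before \<sigma> w v))"
proof -
  from assms obtain p where v: "v \<noteq> u" "ord_before \<sigma> u v" and p: "is_path E p" "hd p = u" "last p = v"
    "length p \<le> 3" and int: "\<forall>x \<in> set p. x \<noteq> u \<and> x \<noteq> v \<longrightarrow> ord_before \<sigma> x v"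
    unfolding wreach_def by auto
  have pd: "distinct p" "p \<noteq> []" "\<And>i. Suc i < length p \<Longrightarrow> E (p ! i) (p ! Suc i)"
    using p(1) unfolding is_path_def by auto
  show ?thesis
  proof (cases p)
    case Nil then show ?thesis using pd by simp
  next
    case (Cons x xs)
    show ?thesis
    proof (cases xs)
      case Nil then show ?thesis using Cons p v by simp
    next
      case (Cons y ys)
      note C = \<open>p = x # xs\<close> Cons
      show ?thesis
      proof (cases ys)
        case Nil
        have "E x y" using pd(3)[of 0] C Nil by simp
        then show ?thesis using C Nil p v by simp
      next
        case (Cons z zs)
        have zs: "zs = []" using p(4) C Cons by simp
        have "E x y" "E y z" using pd(3)[of 0] pd(3)[of 1] C Cons zs by simp_all
        moreover have "y \<noteq> x" "y \<noteq> z" using pd(1) C Cons by auto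
        moreover have "x = u" "z = v" using p C Cons zs by auto
        moreover have "ord_before \<sigma> y v" using int C Cons \<open>y \<noteq> x\<close> \<open>y \<noteq> z\<close> \<open>x = u\<close> \<open>z = v\<close> by auto
        ultimately show ?thesis using v by blast
      qed
    qed
  qed
qed

lemma ord_rank:
  assumes "sorted (map r \<sigma>)" "ord_before \<sigma> x y" shows "r x \<le> r y"
proof -
  from assms(2) obtain i j where "i < j" "j < length \<sigma>" "\<sigma> ! i = x" "\<sigma> ! j = y"
    unfolding ord_before_def by auto
  with sorted_nth_mono[OF assms(1), of i j] show ?thesis by simp
qed

lemma ord_in: "ord_before \<sigma> x y \<Longrightarrow> x \<in> set \<sigma>"
  unfolding ord_before_def by auto

fun rk :: "(nat \<Rightarrow> bool) \<Rightarrow> vert \<Rightarrow> nat" where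
  "rk a (U i k) = 0" | "rk a (F i) = 1" | "rk a (F' i) = 1"
| "rk a (V j) = (if a j then 3 else 2)" | "rk a (V' j) = (if a j then 2 else 3)"

lemma rk_litv[simp]: "rk a (litv (j,b)) = (if a j = b then 3 else 2)"
  by (cases b) auto

lemma G_verts_finite: "finite (G_verts n cs)"
proof -
  have "G_verts n cs \<subseteq> (\<lambda>(i,k). U i k) ` ({..<length cs} \<times> {1..6}) \<union> F ` {..<length cs}
     \<union> F' ` {..<length cs} \<union> V ` {..<n} \<union> V' ` {..<n}"
    unfolding G_verts_def by auto
  then show ?thesis by (rule finite_subset) auto
qed



context
  fixes n :: nat and cs :: "lit set list" and a :: "nat \<Rightarrow> bool"
  assumes tc: "two_clause_3sat n cs" and sat: "\<forall>c\<in>set cs. \<exists>(j,b)\<in>c. a j = b"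
begin

definition R :: "vert \<Rightarrow> vert set" where
  "R u = {v. v \<noteq> u \<and> rk a u \<le> rk a v \<and> (G_adj n cs u v \<or>
     (\<exists>w. G_adj n cs u w \<and> G_adj n cs w v \<and> w \<noteq> u \<and> w \<noteq> v \<and> rk a w \<le> rk a v))}"

lemma R_iff: "v \<in> R u \<longleftrightarrow> v \<noteq> u \<and> rk a u \<le> rk a v \<and> (G_adj n cs u v \<or>
     (\<exists>w. G_adj n cs u w \<and> G_adj n cs w v \<and> w \<noteq> u \<and> w \<noteq> v \<and> rk a w \<le> rk a v))"
  unfolding R_def by simp

lemma cl: "i < length cs \<Longrightarrow> finite (cs!i) \<and> (card (cs!i) = 2 \<or> card (cs!i) = 3)"
proof -
  assume "i < length cs"
  then have "cs!i \<in> set cs" by (rule nth_mem)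
  with tc show ?thesis unfolding two_clause_3sat_def by auto
qed

lemma R_U:
  assumes i: "i < length cs"
  shows "\<exists>S. finite S \<and> card S \<le> 5 \<and> R (U i k) \<subseteq> S"
proof -
  define c where "c = cs ! i"
  define X where "X = {l \<in> c. a (fst l) \<noteq> snd l}"
  define fl where "fl = (\<lambda>(j::nat,b::bool). (j, \<not> b))"
  define A where "A = (if card c = 2 then {F i, F' i} else {})"
  define S where "S = A \<union> litv ` c \<union> litv ` fl ` X"
  have fc: "finite c" and cc: "card c = 2 \<or> card c = 3" using cl[OF i] c_def by auto
  have "R (U i k) \<subseteq> S"
  proof
    fix v assume "v \<in> R (U i k)"
    then have v: "v \<noteq> U i k" "G_adj n cs (U i k) v \<or>
     (\<exists>w. G_adj n cs (U i k) w \<and> G_adj n cs w v \<and> w \<noteq> U i k \<and> w \<noteq> v \<and> rk a w \<le> rk a v)"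
      unfolding R_def by auto
    show "v \<in> S"
    proof (cases "G_adj n cs (U i k) v")
      case True then show ?thesis unfolding adj_U S_def A_def c_def by auto
    next
      case False
      then obtain w where w: "G_adj n cs (U i k) w" "G_adj n cs w v" "w \<noteq> v" "rk a w \<le> rk a v"
        using v by auto
      from w(1) consider "w = F i \<or> w = F' i" | j b where "(j,b) \<in> c" "w = litv (j,b)"
        unfolding adj_U c_def by auto
      then show ?thesis
      proof cases
        case 1 then show ?thesis using w(2,4) by (auto simp: adj_F adj_F')
      next
        case 2
        have "G_adj n cs (litv (j,b)) v" using w(2) 2 by simp
        then have "v = litv (j, \<not> b) \<or> (\<exists>i k. v = U i k)" unfolding adj_lit by auto
        then show ?thesis
        proof
          assume vv: "v = litv (j, \<not> b)"
          with w(4) 2 have "a j \<noteq> b" by (auto split: if_splits)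
          with 2 have "(j,b) \<in> X" unfolding X_def by auto
          then have "v \<in> litv ` fl ` X" unfolding vv fl_def by force
          then show ?thesis unfolding S_def by auto
        next
          assume "\<exists>i k. v = U i k"
          with w(4) 2 show ?thesis by (auto split: if_splits)
        qed
      qed
    qed
  qed
  moreover have "finite S" unfolding S_def A_def X_def using fc by auto
  moreover have "card S \<le> 5"
  proof -
    have "c \<in> set cs" using i c_def by simp
    with sat obtain j b where "(j,b) \<in> c" "a j = b" by blast
    then have "\<exists>l\<in>c. a (fst l) = snd l" by force
    then have "X \<subset> c" unfolding X_def by auto
    then have cX: "card X < card c" using fc by (simp add: psubset_card_mono)
    have cA: "card A \<le> (if card c = 2 then 2 else 0)" unfolding A_def by simp
    have "card S \<le> card A + card (litv ` c) + card (litv ` fl ` X)"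
      unfolding S_def by (meson card_Un_le add_le_mono le_trans order_refl)
    also have "\<dots> \<le> card A + card c + card X"
    proof -
      have fX: "finite X" unfolding X_def by (rule finite_subset[OF _ fc]) blast
      have "card (litv ` fl ` X) \<le> card (fl ` X)" using fX by (intro card_image_le finite_imageI)
      also have "\<dots> \<le> card X" using fX by (rule card_image_le)
      finally have 1: "card (litv ` fl ` X) \<le> card X" .
      have 2: "card (litv ` c) \<le> card c" using fc by (rule card_image_le)
      show ?thesis using 1 2 by linarith
    qed
    finally show ?thesis using cA cX cc by (auto split: if_splits)
  qed
  ultimately show ?thesis by blast
qed


lemma R_F:
  assumes i: "i < length cs" and G: "G = F i \<or> G = F' i"
  shows "\<exists>S. finite S \<and> card S \<le> 5 \<and> R G \<subseteq> S"
proof -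
  define c where "c = cs ! i"
  define S where "S = {F i, F' i} \<union> litv ` c"
  have fc: "finite c" and cc: "card c = 2 \<or> card c = 3" using cl[OF i] c_def by auto
  have "R G \<subseteq> S"
  proof
    fix v assume "v \<in> R G"
    then have v: "v \<noteq> G" "rk a G \<le> rk a v" "G_adj n cs G v \<or>
     (\<exists>w. G_adj n cs G w \<and> G_adj n cs w v \<and> w \<noteq> G \<and> w \<noteq> v \<and> rk a w \<le> rk a v)"
      unfolding R_def by auto
    have rG: "rk a G = 1" using G by auto
    show "v \<in> S"
    proof (cases "G_adj n cs G v")
      case True
      then obtain k where "v = U i k" using G by (auto simp: adj_F adj_F')
      then show ?thesis using v(2) rG by simp
    next
      case False
      then obtain w where w: "G_adj n cs G w" "G_adj n cs w v"
        using v by auto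
      then obtain k where wk: "w = U i k" using G by (auto simp: adj_F adj_F')
      then have "G_adj n cs (U i k) v" using w by simp
      then show ?thesis unfolding adj_U S_def c_def by auto
    qed
  qed
  moreover have "finite S" unfolding S_def using fc by auto
  moreover have "card S \<le> 5"
  proof -
    have "card S \<le> card {F i, F' i} + card (litv ` c)"
      unfolding S_def by (rule card_Un_le)
    also have "\<dots> \<le> 2 + card c" using card_image_le[OF fc, of litv] by simp
    finally show ?thesis using cc by auto
  qed
  ultimately show ?thesis by blast
qed

lemma R_lit:
  assumes j: "j < n"
  shows "\<exists>S. finite S \<and> card S \<le> 5 \<and> R (litv (j,b)) \<subseteq> S"
proof -
  define u where "u = litv (j,b)"
  define I where "I = {i. i < length cs \<and> (j, b) \<in> cs ! i}"
  define S where "S = {litv (j, \<not> b)} \<union> (\<Union>i\<in>I. litv ` (cs!i - {(j,b)}))"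
  have ru: "rk a u \<ge> 2" unfolding u_def by simp
  have "R u \<subseteq> S"
  proof
    fix v assume "v \<in> R u"
    then have v: "v \<noteq> u" "rk a u \<le> rk a v" "G_adj n cs u v \<or>
     (\<exists>w. G_adj n cs u w \<and> G_adj n cs w v \<and> w \<noteq> u \<and> w \<noteq> v \<and> rk a w \<le> rk a v)"
      unfolding R_def by auto
    have rv: "rk a v \<ge> 2" using v(2) ru by simp
    show "v \<in> S"
    proof (cases "G_adj n cs u v")
      case True
      then have "v = litv (j, \<not> b) \<or> (\<exists>i k. v = U i k)" unfolding u_def adj_lit by auto
      then show ?thesis using rv unfolding S_def by auto
    next
      case False
      then obtain w where w: "G_adj n cs u w" "G_adj n cs w v"
        using v by auto
      from w(1) have "w = litv (j, \<not> b) \<or> (\<exists>i k. i < length cs \<and> (j,b) \<in> cs!i \<and> w = U i k)"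
        unfolding u_def adj_lit by auto
      then show ?thesis
      proof
        assume "w = litv (j, \<not> b)"
        then have "G_adj n cs (litv (j, \<not> b)) v" using w by simp
        then have "v = litv (j, b) \<or> (\<exists>i k. v = U i k)" unfolding adj_lit by auto
        then show ?thesis using rv v(1) unfolding u_def by auto
      next
        assume "\<exists>i k. i < length cs \<and> (j,b) \<in> cs!i \<and> w = U i k"
        then obtain i k where ik: "i < length cs" "(j,b) \<in> cs!i" "w = U i k" by blast
        then have "G_adj n cs (U i k) v" using w by simp
        then have "v = F i \<or> v = F' i \<or> (\<exists>l \<in> cs!i. v = litv l)" unfolding adj_U by auto
        then show ?thesis
        proof (elim disjE)
          assume "\<exists>l \<in> cs!i. v = litv l"
          then obtain l where l: "l \<in> cs!i" "v = litv l" by blast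
          with v(1) have "l \<noteq> (j,b)" unfolding u_def by auto
          with l ik have "v \<in> litv ` (cs!i - {(j,b)})" "i \<in> I" unfolding I_def by auto
          then show ?thesis unfolding S_def by blast
        qed (use rv in auto)
      qed
    qed
  qed
  moreover have fI: "finite I" unfolding I_def by auto
  moreover have fS: "finite S" unfolding S_def using fI cl by (auto simp: I_def)
  moreover have "card S \<le> 5"
  proof -
    have cI: "card I = 2" using tc j unfolding two_clause_3sat_def I_def by blast
    have "card S \<le> card {litv (j, \<not> b)} + card (\<Union>i\<in>I. litv ` (cs!i - {(j,b)}))"
      unfolding S_def by (rule card_Un_le)
    also have "\<dots> \<le> 1 + (\<Sum>i\<in>I. card (litv ` (cs!i - {(j,b)})))"
      using card_UN_le[OF fI, of "\<lambda>i. litv ` (cs!i - {(j,b)})"] by simp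
    also have "(\<Sum>i\<in>I. card (litv ` (cs!i - {(j,b)}))) \<le> of_nat (card I) * 2"
    proof (rule sum_bounded_above)
      fix i assume "i \<in> I"
      then have i: "i < length cs" "(j,b) \<in> cs!i" unfolding I_def by auto
      have f: "finite (cs!i)" "card (cs!i) \<le> 3" using cl[OF i(1)] by auto
      have "card (litv ` (cs!i - {(j,b)})) \<le> card (cs!i - {(j,b)})"
        using f by (intro card_image_le) auto
      also have "\<dots> = card (cs!i) - 1" using f i by (simp add: card_Diff_singleton)
      finally show "card (litv ` (cs!i - {(j,b)})) \<le> 2" using f by linarith
    qed
    finally show ?thesis using cI by simp
  qed
  ultimately show ?thesis unfolding u_def by blast
qed

lemma R_all:
  assumes "u \<in> G_verts n cs"
  shows "\<exists>S. finite S \<and> card S \<le> 5 \<and> R u \<subseteq> S"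
proof -
  from assms consider (u) i k where "i < length cs" "u = U i k"
    | (f) i where "i < length cs" "u = F i \<or> u = F' i"
    | (v) j where "j < n" "u = litv (j,True)"
    | (v') j where "j < n" "u = litv (j,False)"
    unfolding G_verts_def by auto
  then show ?thesis
  proof cases
    case u then show ?thesis using R_U by simp
  next
    case f then show ?thesis using R_F by simp
  next
    case v then show ?thesis using R_lit[of j True] by simp
  next
    case v' then show ?thesis using R_lit[of j False] by simp
  qed
qed
end

lemma ord_in2: "ord_before \<sigma> x y \<Longrightarrow> y \<in> set \<sigma>"
  unfolding ord_before_def by auto

theorem lemma3p2:
  fixes n :: nat and cs :: "lit set list"
  assumes "two_clause_3sat n cs"
    and "satisfiable n cs"
  shows "wcol (G_verts n cs) (G_adj n cs) 2 \<le> 5"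
proof -
  obtain a where sat: "\<forall>c\<in>set cs. \<exists>(j,b)\<in>c. a j = b" using assms(2) unfolding satisfiable_def by blast
  define Vs where "Vs = G_verts n cs"
  define E where "E = G_adj n cs"
  have fV: "finite Vs" unfolding Vs_def by (rule G_verts_finite)
  obtain L where L: "distinct L" "set L = Vs" using finite_distinct_list[OF fV] by blast
  define \<sigma> where "\<sigma> = sort_key (rk a) L"
  have \<sigma>: "distinct \<sigma>" "set \<sigma> = Vs" "sorted (map (rk a) \<sigma>)"
    unfolding \<sigma>_def using L by (auto simp: distinct_sort)
  have bnd: "card (wreach E \<sigma> 2 u) \<le> 5" if u: "u \<in> Vs" for u
  proof -
    obtain S where S: "finite S" "card S \<le> 5" "R n cs a u \<subseteq> S"
      using R_all[OF assms(1) sat] u unfolding Vs_def by blast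
    have "wreach E \<sigma> 2 u \<subseteq> R n cs a u"
    proof
      fix v assume "v \<in> wreach E \<sigma> 2 u"
      from wreach_sub[OF this] have h: "v \<noteq> u" "ord_before \<sigma> u v"
        "E u v \<or> (\<exists>w. E u w \<and> E w v \<and> w \<noteq> u \<and> w \<noteq> v \<and> ord_before \<sigma> w v)" by auto
      have "rk a u \<le> rk a v" using ord_rank[OF \<sigma>(3) h(2)] .
      moreover have "E u v \<or> (\<exists>w. E u w \<and> E w v \<and> w \<noteq> u \<and> w \<noteq> v \<and> rk a w \<le> rk a v)"
        using h(3) ord_rank[OF \<sigma>(3)] by blast
      ultimately show "v \<in> R n cs a u" using h(1) unfolding R_iff[OF assms(1) sat] E_def by blast
    qed
    then have "card (wreach E \<sigma> 2 u) \<le> card S" using S by (meson card_mono order_trans)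
    then show ?thesis using S by simp
  qed
  define K where "K = {Max (insert 0 ((\<lambda>u. card (wreach E \<sigma>' 2 u)) ` Vs)) | \<sigma>'.
                        distinct \<sigma>' \<and> set \<sigma>' = Vs}"
  have "Max (insert 0 ((\<lambda>u. card (wreach E \<sigma> 2 u)) ` Vs)) \<in> K"
    unfolding K_def using \<sigma> by blast
  moreover have "Max (insert 0 ((\<lambda>u. card (wreach E \<sigma> 2 u)) ` Vs)) \<le> 5"
    using fV bnd by (subst Max_le_iff) auto
  moreover have "finite K"
  proof -
    have "K \<subseteq> {..card Vs}"
    proof
      fix x assume "x \<in> K"
      then obtain \<sigma>' where s: "set \<sigma>' = Vs" and x: "x = Max (insert 0 ((\<lambda>u. card (wreach E \<sigma>' 2 u)) ` Vs))"
        unfolding K_def by blast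
      have "card (wreach E \<sigma>' 2 u) \<le> card Vs" for u
      proof -
        have "wreach E \<sigma>' 2 u \<subseteq> Vs"
        proof
          fix v assume "v \<in> wreach E \<sigma>' 2 u"
          then have "ord_before \<sigma>' u v" unfolding wreach_def by simp
          then show "v \<in> Vs" using s ord_in2 by metis
        qed
        then show ?thesis using fV by (rule card_mono[rotated])
      qed
      then have "x \<le> card Vs" unfolding x using fV by (subst Max_le_iff) auto
      then show "x \<in> {..card Vs}" by simp
    qed
    then show ?thesis by (rule finite_subset) simp
  qed
  ultimately have "Min K \<le> 5" by (meson Min_le order_trans)
  then show ?thesis unfolding K_def wcol_def Vs_def E_def .
qed


end
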